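(* Let $C=(1,c_2,c_3,c_4,c_5,c_6)=(1,c_2,2c_2-1,c_4,c_2+c_4-1,2c_4-1)$ be a system that is canonical and whose subsystem $(1,c_2,c_3,c_4,c_5)$ is noncanonical, and let $\ell=\lceil c_5/c_3\rceil$. Then $c_4\ge 3c_2-1$, $\mathrm{grd}_C(\ell c_3)\le\ell$, and $\mathrm{grd}_C(\ell c_3)=\ell c_3-c_5+1-\lfloor(\ell c_3-c_5)/c_2\rfloor(c_2-1)$.
   Context: A system is a tuple $C=(c_1,\dots,c_n)$ of integers with $1=c_1<c_2<\dots<c_n$; for $k\le n$, $(c_1,\dots,c_k)$ is a subsystem. For a positive integer $v$, $\mathrm{opt}_C(v)$ is the minimum of $\sum_i x_i$ over $x\in\mathbb{Z}_{\ge0}^n$ with $\sum_i c_ix_i=v$. The greedy representation of $v$ is produced by: for $i=n$ down to $1$, while $c_i\le$ remaining value, take a coin $c_i$. $\mathrm{grd}_C(v)$ is its number of coins. A positive integer $w$ is a counterexample if $\mathrm{opt}_C(w)<\mathrm{grd}_C(w)$; $C$ is canonical if it has none, noncanonical otherwise. *)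

theory Defs
  imports Complex_Main
begin

definition is_system :: "nat list \<Rightarrow> bool" where
  "is_system cs \<longleftrightarrow> cs \<noteq> [] \<and> cs ! 0 = 1 \<and> sorted_wrt (<) cs"

definition reps :: "nat list \<Rightarrow> nat \<Rightarrow> nat list set" where
  "reps cs v = {x. length x = length cs \<and> (\<Sum>i<length cs. cs ! i * x ! i) = v}"

definition opt :: "nat list \<Rightarrow> nat \<Rightarrow> nat" where
  "opt cs v = (LEAST k. \<exists>x \<in> reps cs v. sum_list x = k)"

text \<open>Greedy on a list of coins given in decreasing order: taking coin c while c \<le> remaining
  value amounts to taking (v div c) coins and leaving v mod c.\<close>
fun grd_desc :: "nat list \<Rightarrow> nat \<Rightarrow> nat" where
  "grd_desc [] v = 0"
| "grd_desc (c # cs) v = v div c + grd_desc cs (v mod c)"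

definition grd :: "nat list \<Rightarrow> nat \<Rightarrow> nat" where
  "grd cs v = grd_desc (rev cs) v"

definition canonical :: "nat list \<Rightarrow> bool" where
  "canonical cs \<longleftrightarrow> (\<forall>w>0. \<not> opt cs w < grd cs w)"

end

theory Submission
  imports Defs
begin

lemma opt_le: "x \<in> reps cs v \<Longrightarrow> opt cs v \<le> sum_list x"
  unfolding opt_def by (rule Least_le) blast

lemma canon_le:
  assumes "canonical cs" "v > 0" "x \<in> reps cs v"
  shows "grd cs v \<le> sum_list x"
  using assms opt_le[OF assms(3)] unfolding canonical_def by (meson le_trans not_less)

lemma noncanon:
  assumes "x \<in> reps cs v" "v > 0" "sum_list x < grd cs v"
  shows "\<not> canonical cs"
  using canon_le[of cs v x] assms by linarith

lemma canonI:
  assumes ex: "\<And>v. \<exists>x. x \<in> reps cs v"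
    and le: "\<And>v x. v > 0 \<Longrightarrow> x \<in> reps cs v \<Longrightarrow> grd cs v \<le> sum_list x"
  shows "canonical cs"
  unfolding canonical_def
proof (intro allI impI)
  fix w :: nat assume "w > 0"
  obtain x where x: "x \<in> reps cs w" using ex by blast
  have "\<exists>k. \<exists>x \<in> reps cs w. sum_list x = k" using x by blast
  then have "\<exists>x \<in> reps cs w. sum_list x = opt cs w"
    unfolding opt_def by (rule LeastI_ex)
  then show "\<not> opt cs w < grd cs w" using le[OF \<open>w>0\<close>] by force
qed

lemma divmod1: "a < (n::nat) \<Longrightarrow> b = a + n \<Longrightarrow> b div n = 1 \<and> b mod n = a"
  by simp

lemma sum5: "(\<Sum>i<(5::nat). f i) = f 0 + f 1 + f 2 + f 3 + (f 4 :: nat)"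
  by (simp add: eval_nat_numeral)

lemma sum6: "(\<Sum>i<(6::nat). f i) = f 0 + f 1 + f 2 + f 3 + f 4 + (f 5 :: nat)"
  by (simp add: eval_nat_numeral)

lemma len5: "length x = 5 \<Longrightarrow> x = [x!0, x!1, x!2, x!3, x!4]"
  by (cases x; cases "tl x"; cases "tl (tl x)"; cases "tl (tl (tl x))"; cases "tl (tl (tl (tl x)))"; auto)

lemma grd_small:
  fixes d r :: nat
  assumes "d \<ge> 1" "r > 0" "r < 4*d+1"
  shows "grd_desc [1+3*d, 1+2*d, 1+d, 1] r = 1 + (r-1) mod d"
proof -
  define k where "k = (r-1) div d"
  define t where "t = (r-1) mod d"
  have "r - 1 = k*d + t" unfolding k_def t_def by simp
  then have r: "r = 1 + k*d + t" using assms(2) by linarith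
  have t: "t < d" unfolding t_def using assms by simp
  have "k*d < 4*d" using r assms by linarith
  then have "k < 4" by simp
  then have "k = 0 \<or> k = 1 \<or> k = 2 \<or> k = 3" by linarith
  moreover {
    assume "k = 0"
    then have "r = 1 + t" using r by simp
    then have ?thesis using t by (simp add: t_def)
  } moreover {
    assume "k = 1"
    then have r1: "r = (1+d) + t" using r by simp
    have "r div (1+3*d) = 0" "r div (1+2*d) = 0" "r mod (1+3*d) = r" "r mod (1+2*d) = r"
      using r1 t by simp_all
    moreover have "r div (1+d) = 1 \<and> r mod (1+d) = t" using r1 t by (intro divmod1) simp_all
    ultimately have ?thesis by (simp add: t_def)
  } moreover {
    assume "k = 2"
    then have r1: "r = (1+2*d) + t" using r by simp
    have "r div (1+3*d) = 0" "r mod (1+3*d) = r"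
      using r1 t by simp_all
    moreover have "r div (1+2*d) = 1 \<and> r mod (1+2*d) = t" using r1 t by (intro divmod1) simp_all
    moreover have "t div (1+d) = 0" "t mod (1+d) = t" using t by simp_all
    ultimately have ?thesis by (simp add: t_def)
  } moreover {
    assume "k = 3"
    then have r1: "r = (1+3*d) + t" using r by simp
    have "r div (1+3*d) = 1 \<and> r mod (1+3*d) = t" using r1 t by (intro divmod1) simp_all
    moreover have "t div (1+d) = 0" "t mod (1+d) = t" "t div (1+2*d) = 0" "t mod (1+2*d) = t"
      using t by simp_all
    ultimately have ?thesis by (simp add: t_def)
  }
  ultimately show ?thesis by blast
qed

lemma sub_canon:
  fixes d :: nat
  assumes d: "d \<ge> 1"
  shows "canonical [1, 1+d, 1+2*d, 1+3*d, 1+4*d]" (is "canonical ?cs")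
proof (rule canonI)
  fix v
  show "\<exists>x. x \<in> reps ?cs v"
    by (rule exI[of _ "[v,0,0,0,0]"]) (simp add: reps_def sum5)
next
  fix v x assume v: "v > 0" and x: "x \<in> reps ?cs v"
  have lx: "length x = 5" using x by (simp add: reps_def)
  define x0 where "x0 = x!0"
  define x1 where "x1 = x!1"
  define x2 where "x2 = x!2"
  define x3 where "x3 = x!3"
  define x4 where "x4 = x!4"
  have xe: "x = [x0,x1,x2,x3,x4]" using len5[OF lx] by (simp add: x0_def x1_def x2_def x3_def x4_def)
  have "x0 + (1+d)*x1 + (1+2*d)*x2 + (1+3*d)*x3 + (1+4*d)*x4 = v"
    using x by (simp add: reps_def sum5 xe)
  define s where "s = sum_list x"
  define K where "K = x1 + 2*x2 + 3*x3 + 4*x4"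
  have s: "s = x0+x1+x2+x3+x4" by (simp add: s_def xe)
  have vs: "v = s + d*K" using \<open>_ = v\<close> unfolding s K_def by (simp add: algebra_simps)
  have "K \<le> 4*s" unfolding s K_def by simp
  then have "d*K \<le> d*(4*s)" by simp
  then have vle: "v \<le> (4*d+1)*s" using vs by (simp add: algebra_simps)
  define q where "q = v div (4*d+1)"
  define r where "r = v mod (4*d+1)"
  have vq: "v = (4*d+1)*q + r" using div_mult_mod_eq[of v "4*d+1"] unfolding q_def r_def by (metis mult.commute)
  have rlt: "r < 4*d+1" unfolding r_def by simp
  have g: "grd ?cs v = q + grd_desc [1+3*d, 1+2*d, 1+d, 1] r"
    by (simp add: grd_def q_def r_def)
  show "grd ?cs v \<le> sum_list x"
  proof (cases "r = 0")
    case True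
    then have "grd_desc [1+3*d, 1+2*d, 1+d, 1] r = 0" by simp
    moreover have "q \<le> s" using vq vle True by (metis add_0_right mult_le_cancel1 add_gr_0 zero_less_one)
    ultimately show ?thesis using g s_def by simp
  next
    case False
    have "(4*d+1)*q < (4*d+1)*s" using vq vle False by linarith
    then have qs: "q < s" by (meson mult_less_cancel1)
    define e where "e = s - q"
    have "e + d*K = 4*d*q + r" using vs vq qs unfolding e_def by (simp add: algebra_simps)
    then have "(e-1) + d*K = (r-1) + d*(4*q)" using qs False unfolding e_def by (simp add: algebra_simps)
    then have "((e-1) + d*K) mod d = ((r-1) + d*(4*q)) mod d" by simp
    then have "(e-1) mod d = (r-1) mod d" by simp
    then have "(r-1) mod d \<le> e - 1" by (metis mod_less_eq_dividend)
    then show ?thesis using g grd_small[OF d _ rlt] False qs unfolding e_def s_def by simp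
  qed
qed

theorem lemma9:
  fixes c2 c4 :: nat
  defines "c3 \<equiv> 2 * c2 - 1" and "c5 \<equiv> c2 + c4 - 1" and "c6 \<equiv> 2 * c4 - 1"
  defines "C \<equiv> [1, c2, c3, c4, c5, c6]"
  defines "l \<equiv> nat \<lceil>real c5 / real c3\<rceil>"
  assumes "is_system C"
    and "canonical C"
    and "\<not> canonical (take 5 C)"
  shows "c4 \<ge> 3 * c2 - 1 \<and> grd C (l * c3) \<le> l \<and>
         int (grd C (l * c3)) = int (l * c3) - int c5 + 1
            - \<lfloor>(real (l * c3) - real c5) / real c2\<rfloor> * (int c2 - 1)"
proof -
  have ord: "1 < c2" "c2 < c3" "c3 < c4" "c4 < c5" "c5 < c6"
    using assms(6) by (simp_all add: is_system_def C_def)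
  have c3e: "c3 = 2*c2 - 1" and c5e: "c5 = c2 + c4 - 1" and c6e: "c6 = 2*c4 - 1"
    by (simp_all add: c3_def c5_def c6_def)
  have gC: "\<And>v. grd C v = v div c6 + grd_desc [c5,c4,c3,c2,1] (v mod c6)"
    by (simp add: grd_def C_def)
  have repC: "\<And>x v. length x = 6 \<Longrightarrow> (\<Sum>i<6. C ! i * x ! i) = v \<Longrightarrow> x \<in> reps C v"
  proof -
    fix x v assume "length x = 6" "(\<Sum>i<6. C ! i * x ! i) = v"
    moreover have "length C = 6" by (simp add: C_def)
    ultimately show "x \<in> reps C v" unfolding reps_def by simp
  qed
  have A: "c4 \<ge> 3 * c2 - 1"
  proof (rule ccontr)
    assume "\<not> ?thesis"
    then have lt: "c4 \<le> 3*c2 - 2" by linarith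
    consider "c4 = 3*c2 - 2" | "c4 = 2*c2" "c2 \<ge> 3" | "2*c2 < c4" "c4 < 3*c2 - 2"
      using lt ord c3e by linarith
    then show False
    proof cases
      case 1
      define d where "d = c2 - 1"
      have "take 5 C = [1, 1+d, 1+2*d, 1+3*d, 1+4*d]"
        using 1 ord unfolding C_def d_def c3e c5e by (simp; linarith)
      then have "canonical (take 5 C)" using sub_canon[of d] ord d_def by simp
      then show False using assms(8) by simp
    next
      case 2
      define w where "w = 2*c3"
      have x: "[0,0,2,0,0,0] \<in> reps C w"
        by (rule repC) (simp_all add: sum6 C_def w_def)
      have "w div c6 = 0" "w mod c6 = w" using 2 ord unfolding w_def c3e c6e by simp_all
      moreover have "w div c5 = 1 \<and> w mod c5 = c2 - 1" using 2 ord unfolding w_def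
        by (intro divmod1) (simp_all add: c3e c5e)
      moreover have "(c2-1) div c4 = 0" "(c2-1) mod c4 = c2 - 1"
         "(c2-1) div c3 = 0" "(c2-1) mod c3 = c2 - 1"
         "(c2-1) div c2 = 0" "(c2-1) mod c2 = c2 - 1" using ord by simp_all
      ultimately have "grd C w = c2" using gC[of w] ord by simp
      then show False using noncanon[OF x] assms(7) 2 ord unfolding w_def by simp
    next
      case 3
      define w where "w = c2 + c3"
      have x: "[0,1,1,0,0,0] \<in> reps C w"
        by (rule repC) (simp_all add: sum6 C_def w_def)
      have "w div c6 = 0" "w mod c6 = w" "w div c5 = 0" "w mod c5 = w"
        using 3 ord unfolding w_def c3e c6e c5e by simp_all
      moreover have "w div c4 = 1 \<and> w mod c4 = w - c4" using 3 ord unfolding w_def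
        by (intro divmod1) (simp_all add: c3e)
      moreover have "(w-c4) div c3 = 0" "(w-c4) mod c3 = w - c4"
         "(w-c4) div c2 = 0" "(w-c4) mod c2 = w - c4" using 3 ord unfolding w_def c3e by simp_all
      ultimately have "grd C w = 1 + (w - c4)" using gC[of w] ord by simp
      moreover have "w - c4 \<ge> 2" using 3 ord unfolding w_def c3e by linarith
      ultimately show False using noncanon[OF x] assms(7) 3 ord unfolding w_def by simp
    qed
  qed
  have c3p: "real c3 > 0" using ord by simp
  have ce: "real_of_int \<lceil>real c5 / real c3\<rceil> - 1 < real c5 / real c3"
           "real c5 / real c3 \<le> real_of_int \<lceil>real c5 / real c3\<rceil>"
    using ceiling_correct by blast+
  have "\<lceil>real c5 / real c3\<rceil> \<ge> 0" using ce(2) c3p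
    by (metis ceiling_mono ceiling_zero divide_nonneg_nonneg of_nat_0_le_iff)
  then have rl: "real l = real_of_int \<lceil>real c5 / real c3\<rceil>" unfolding l_def by simp
  have "real c5 / real c3 \<le> real l" using rl by simp
  then have "real c5 \<le> real l * real c3" using c3p by (simp add: pos_divide_le_eq)
  then have L1: "c5 \<le> l * c3" by (metis of_nat_le_iff of_nat_mult)
  have "real l * real c3 < real c5 + real c3" using ce(1) c3p rl
    by (simp add: field_simps)
  then have L2: "l * c3 < c5 + c3" by (metis of_nat_add of_nat_less_iff of_nat_mult)
  have l1: "l \<ge> 1" proof (rule ccontr)
    assume "\<not> 1 \<le> l" then have "l = 0" by simp
    then show False using L1 ord by simp
  qed
  define m where "m = l * c3"
  define r where "r = m - c5"
  have rlt: "r < c3" using L2 L1 unfolding r_def m_def by linarith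
  have mc6: "m < c6" using L2 A ord unfolding m_def c6e c5e c3e by linarith
  have B: "grd C m \<le> l"
  proof -
    have x: "[0,0,l,0,0,0] \<in> reps C m"
      by (rule repC) (simp_all add: sum6 C_def m_def)
    have "m > 0" using L1 ord unfolding m_def by linarith
    from canon_le[OF assms(7) this x] show ?thesis by simp
  qed
  have "m div c6 = 0" "m mod c6 = m" using mc6 by simp_all
  moreover have "m div c5 = 1 \<and> m mod c5 = r" using L1 L2 ord rlt unfolding r_def
    by (intro divmod1) (simp_all add: m_def)
  moreover have "r div c4 = 0" "r mod c4 = r" "r div c3 = 0" "r mod c3 = r"
    using rlt ord by simp_all
  ultimately have g: "grd C m = 1 + r div c2 + r mod c2" using gC[of m] by simp
  have fl: "\<lfloor>(real m - real c5) / real c2\<rfloor> = int (r div c2)"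
  proof -
    have "real m - real c5 = real r" using L1 unfolding r_def m_def by simp
    then show ?thesis by (simp add: floor_divide_of_nat_eq)
  qed
  have "int (grd C m) = int m - int c5 + 1 - int (r div c2) * (int c2 - 1)"
  proof -
    have e: "r = r div c2 * c2 + r mod c2" by simp
    have "int m - int c5 = int r" using L1 unfolding r_def m_def by simp
    moreover have "int r = int (r div c2) * int c2 + int (r mod c2)"
      using e by (metis of_nat_add of_nat_mult)
    ultimately show ?thesis using g by (simp add: algebra_simps)
  qed
  then show ?thesis using A B fl unfolding m_def by simp
qed

end
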